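(* Let $\rho:(0,\infty)\to(0,\infty)$ be continuous with $\int_0^\infty\rho(r)(1\wedge r^2)r^{d-1}dr<\infty$, let $\gamma(r):=\inf_{0<s\le r+1}\rho(s)$ and assume $\gamma(r)>0$ for all $r>0$. Let $\alpha_0\in(0,1)$ be such that $\int_1^\infty r^{d+\alpha_0-1}\rho(r)dr<\infty$ and $\limsup_{|x|\to\infty}\frac{\sup_{|z|\ge|x|}e^{-V(z)}}{\gamma(|x|)|x|^{\alpha_0}}=0$. Let $\phi\in C^\infty(\mathbb R^d)$ with $\phi\ge1$ and $\phi(x)=1+|x|^{\alpha_0}$ for $|x|>1$. Then $\hat L_{\rho,V}\phi$ is well defined and locally bounded, and there exist $r_0,C_1,C_2>0$ such that for all $x$, $$\hat L_{\rho,V}\phi(x)\le -C_1e^{V(x)}\gamma(|x|)\phi(x)+C_2\mathbf 1_{B(0,r_0)}(x).$$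
   Context: Let $d\ge1$. $V:\mathbb R^d\to\mathbb R$ is a locally bounded measurable function such that $e^{-V}$ is bounded and $\int e^{-V(x)}dx<\infty$. The truncated operator is $$\hat L_{\rho,V}f(x):=\frac12\int_{\{|z|>1\}}\big(f(x+z)-f(x)\big)\rho(|z|)\big(e^{V(x)-V(x+z)}+1\big)dz.$$ $B(0,r_0)$ is the open ball of radius $r_0$ centered at $0$. *)

theory Defs
  imports "HOL-Analysis.Analysis"
begin

fun Ck :: "nat \<Rightarrow> ('a::euclidean_space \<Rightarrow> real) \<Rightarrow> bool" where
  "Ck 0 f = continuous_on UNIV f"
| "Ck (Suc n) f = (\<exists>D. (\<forall>x. (f has_derivative D x) (at x)) \<and> (\<forall>v. Ck n (\<lambda>x. D x v)))"

definition smooth :: "('a::euclidean_space \<Rightarrow> real) \<Rightarrow> bool" where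
  "smooth f \<longleftrightarrow> (\<forall>n. Ck n f)"

definition gam :: "(real \<Rightarrow> real) \<Rightarrow> real \<Rightarrow> real" where
  "gam \<rho> r = Inf (\<rho> ` {0<..r+1})"

definition Lint :: "(real \<Rightarrow> real) \<Rightarrow> ('a::euclidean_space \<Rightarrow> real) \<Rightarrow> ('a \<Rightarrow> real) \<Rightarrow> 'a \<Rightarrow> 'a \<Rightarrow> real" where
  "Lint \<rho> V f x z = (f (x + z) - f x) * \<rho> (norm z) * (exp (V x - V (x + z)) + 1)"

definition hatL :: "(real \<Rightarrow> real) \<Rightarrow> ('a::euclidean_space \<Rightarrow> real) \<Rightarrow> ('a \<Rightarrow> real) \<Rightarrow> 'a \<Rightarrow> real" where
  "hatL \<rho> V f x = (1/2) * (\<integral>z\<in>{z. norm z > 1}. Lint \<rho> V f x z \<partial>lborel)"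

end

theory Submission
  imports Defs
begin


definition radd :: "nat \<Rightarrow> real \<Rightarrow> real" where
  "radd n r = (if 0 \<le> r then real n * unit_ball_vol (real n) * r ^ (n - 1) else 0)"

definition radF :: "nat \<Rightarrow> real \<Rightarrow> real" where
  "radF n r = unit_ball_vol (real n) * (max r 0) ^ n"

lemma radd_meas[measurable]: "radd n \<in> borel_measurable borel"
  unfolding radd_def by measurable

lemma radd_nonneg: "radd n r \<ge> 0"
  by (simp add: radd_def)

lemma radF_mono: "a \<le> b \<Longrightarrow> radF n a \<le> radF n b"
  unfolding radF_def by (intro mult_left_mono power_mono) auto

lemma emeasure_ball_0:
  "emeasure lborel (ball (0::'a::euclidean_space) r) = ennreal (radF DIM('a) r)"
proof (cases "r \<ge> 0")
  case True thus ?thesis by (simp add: emeasure_ball radF_def)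
next
  case False
  then have "ball (0::'a) r = {}" by auto
  then have "emeasure lborel (ball (0::'a) r) = 0" by (metis emeasure_empty)
  thus ?thesis using False by (simp add: radF_def power_0_left)
qed

lemma distr_norm_Ico:
  assumes "a \<le> b"
  shows "emeasure (distr lborel borel (norm::'a::euclidean_space\<Rightarrow>real)) {a..<b}
     = ennreal (radF DIM('a) b - radF DIM('a) a)"
proof -
  have "emeasure (distr lborel borel (norm::'a\<Rightarrow>real)) {a..<b}
      = emeasure lborel (norm -` {a..<b} \<inter> space (lborel::'a measure))"
    by (subst emeasure_distr) auto
  also have "norm -` {a..<b} \<inter> space (lborel::'a measure) = ball 0 b - ball 0 a"
    by auto
  also have "emeasure lborel (ball (0::'a) b - ball 0 a) = emeasure lborel (ball (0::'a) b) - emeasure lborel (ball (0::'a) a)"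
    using assms by (intro emeasure_Diff) (auto simp: emeasure_ball_0)
  also have "\<dots> = ennreal (radF DIM('a) b - radF DIM('a) a)"
    by (simp add: emeasure_ball_0 ennreal_minus radF_def)
  finally show ?thesis .
qed

lemma density_Ico:
  assumes "a \<le> b" and that: "n > 0"
  shows "emeasure (density lborel (\<lambda>r. ennreal (radd n r))) {a..<b}
     = ennreal (radF n b - radF n a)"
proof -
  define c where "c = max a 0"
  define e where "e = max b 0"
  have ce: "0 \<le> c" "c \<le> e" using assms by (auto simp: c_def e_def)
  have "emeasure (density lborel (\<lambda>r. ennreal (radd n r))) {a..<b}
      = (\<integral>\<^sup>+x. ennreal (radd n x) * indicator {a..<b} x \<partial>lborel)"
    by (subst emeasure_density) auto
  also have "\<dots> = (\<integral>\<^sup>+x. ennreal (real n * unit_ball_vol (real n) * x ^ (n - 1)) * indicator {c..e} x \<partial>lborel)"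
  proof (rule nn_integral_cong_AE)
    show "AE x in lborel. ennreal (radd n x) * indicator {a..<b} x =
       ennreal (real n * unit_ball_vol (real n) * x ^ (n - 1)) * indicator {c..e} x"
      using AE_lborel_singleton[of e]
    proof eventually_elim
      case (elim x)
      show ?case
      proof (cases "x < 0")
        case True thus ?thesis using ce by (auto simp: radd_def indicator_def)
      next
        case False
        then have "(x \<in> {a..<b}) = (x \<in> {c..e})" using elim by (auto simp: c_def e_def)
        thus ?thesis using False by (auto simp: radd_def indicator_def)
      qed
    qed
  qed
  also have "\<dots> = ennreal (unit_ball_vol (real n) * e ^ n - unit_ball_vol (real n) * c ^ n)"
    using ce that
    by (intro nn_integral_FTC_Icc) (auto intro!: derivative_eq_intros simp: algebra_simps)
  also have "\<dots> = ennreal (radF n b - radF n a)"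
    by (simp add: radF_def c_def e_def)
  finally show ?thesis .
qed

lemma distr_norm_eq:
  "distr lborel borel (norm::'a::euclidean_space\<Rightarrow>real) = density lborel (\<lambda>r. ennreal (radd DIM('a) r))"
proof (rule measure_eqI_generator_eq[where E="range (\<lambda>(a,b). {a..<b::real})" and \<Omega>=UNIV
      and A="\<lambda>i. {-real i..<real i}"])
  let ?E = "range (\<lambda>(a,b). {a..<b::real})"
  show "Int_stable ?E"
    unfolding Int_stable_def by (auto simp: image_iff)
  show "?E \<subseteq> Pow UNIV" by simp
  have sb: "sets borel = sigma_sets UNIV ?E"
    by (subst borel_eq_atLeastLessThan) (simp add: sets_measure_of)
  show "sets (distr lborel borel (norm::'a\<Rightarrow>real)) = sigma_sets UNIV ?E"
    using sb by simp
  show "sets (density lborel (\<lambda>r. ennreal (radd DIM('a) r))) = sigma_sets UNIV ?E"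
    using sb by simp
  show "X \<in> ?E \<Longrightarrow> emeasure (distr lborel borel (norm::'a\<Rightarrow>real)) X = emeasure (density lborel (\<lambda>r. ennreal (radd DIM('a) r))) X" for X
  proof -
    assume "X \<in> ?E"
    then obtain a b where X: "X = {a..<b}" by auto
    show ?thesis
    proof (cases "a \<le> b")
      case True thus ?thesis unfolding X by (simp add: distr_norm_Ico density_Ico)
    next
      case False
      then have "X = {}" using X by auto
      thus ?thesis by simp
    qed
  qed
  show "range (\<lambda>i. {-real i..<real i}) \<subseteq> ?E" by auto
  show "(\<Union>i. {-real i..<real i}) = UNIV"
  proof safe
    fix x :: real
    obtain n :: nat where "\<bar>x\<bar> < real n" using reals_Archimedean2 by blast
    thus "x \<in> (\<Union>i. {-real i..<real i})" by (auto intro!: exI[of _ n])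
  qed auto
  show "emeasure (distr lborel borel (norm::'a\<Rightarrow>real)) {-real i..<real i} \<noteq> \<infinity>" for i
    by (simp add: distr_norm_Ico)
qed

lemma nn_integral_radial:
  fixes h :: "real \<Rightarrow> ennreal"
  assumes h[measurable]: "h \<in> borel_measurable borel"
  shows "(\<integral>\<^sup>+z. h (norm z) \<partial>(lborel::'a::euclidean_space measure))
       = (\<integral>\<^sup>+r. ennreal (radd DIM('a) r) * h r \<partial>lborel)"
proof -
  have "(\<integral>\<^sup>+z. h (norm z) \<partial>(lborel::'a measure)) = (\<integral>\<^sup>+r. h r \<partial>distr lborel borel (norm::'a\<Rightarrow>real))"
    by (subst nn_integral_distr) auto
  also have "\<dots> = (\<integral>\<^sup>+r. ennreal (radd DIM('a) r) * h r \<partial>lborel)"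
    unfolding distr_norm_eq by (subst nn_integral_density) auto
  finally show ?thesis .
qed



lemma powr_subadd:
  fixes t s a :: real
  assumes "0 \<le> t" "0 \<le> s" "0 < a" "a \<le> 1"
  shows "(t + s) powr a \<le> t powr a + s powr a"
proof (cases "t + s = 0")
  case True thus ?thesis using assms by simp
next
  case False
  then have p: "t + s > 0" using assms by simp
  have 1: "t / (t+s) \<le> (t/(t+s)) powr a"
    using powr_mono'[of a 1 "t/(t+s)"] assms p by simp
  have 2: "s / (t+s) \<le> (s/(t+s)) powr a"
    using powr_mono'[of a 1 "s/(t+s)"] assms p by simp
  have "1 = t/(t+s) + s/(t+s)" using p by (simp add: add_divide_distrib[symmetric])
  also have "\<dots> \<le> (t powr a + s powr a) / (t+s) powr a"
    using 1 2 by (simp add: powr_divide add_divide_distrib assms)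
  finally have "(t+s) powr a \<le> t powr a + s powr a"
    using p by (simp add: le_divide_eq)
  thus ?thesis .
qed

lemma powr_norm_diff:
  fixes x z :: "'a::real_normed_vector"
  assumes "0 < a" "a \<le> 1"
  shows "\<bar>norm (x + z) powr a - norm x powr a\<bar> \<le> norm z powr a"
proof -
  have key: "u powr a \<le> v powr a + \<bar>u - v\<bar> powr a" if "0 \<le> u" "0 \<le> v" for u v :: real
  proof -
    have "u powr a \<le> (v + \<bar>u - v\<bar>) powr a" using that assms by (intro powr_mono2) auto
    also have "\<dots> \<le> v powr a + \<bar>u - v\<bar> powr a" using that assms by (intro powr_subadd) auto
    finally show ?thesis .
  qed
  have d: "\<bar>norm (x + z) - norm x\<bar> \<le> norm z"
    using norm_triangle_ineq3[of "x + z" x] by simp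
  have "\<bar>norm (x + z) - norm x\<bar> powr a \<le> norm z powr a"
    using d assms by (intro powr_mono2) auto
  moreover have "\<bar>norm x - norm (x + z)\<bar> = \<bar>norm (x + z) - norm x\<bar>" by simp
  ultimately show ?thesis
    using key[of "norm (x+z)" "norm x"] key[of "norm x" "norm (x+z)"] by auto
qed

lemma locbdd_compact:
  fixes f :: "'a::metric_space \<Rightarrow> real"
  assumes "\<forall>x. \<exists>e>0. bounded (f ` ball x e)" "compact K"
  shows "bounded (f ` K)"
proof -
  from assms(1) obtain e where e: "\<And>x. e x > 0 \<and> bounded (f ` ball x (e x))" by metis
  have "K \<subseteq> (\<Union>c\<in>K. ball c (e c))" using e by force
  then obtain C' where C': "C' \<subseteq> K" "finite C'" "K \<subseteq> (\<Union>c\<in>C'. ball c (e c))"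
    using compactE_image[OF assms(2), of K "\<lambda>c. ball c (e c)"] by auto
  have "f ` K \<subseteq> (\<Union>c\<in>C'. f ` ball c (e c))" using C'(3) by blast
  moreover have "bounded (\<Union>c\<in>C'. f ` ball c (e c))" using C'(2) e by auto
  ultimately show ?thesis using bounded_subset by blast
qed

lemma radial_int:
  fixes \<rho> :: "real \<Rightarrow> real" and a :: real
  assumes cont: "continuous_on {0<..} \<rho>" and pos: "\<forall>r>0. \<rho> r > 0" and a: "0 \<le> a"
    and mom: "set_integrable lborel {1..} (\<lambda>r. r powr (real DIM('a) + a - 1) * \<rho> r)"
  shows "integrable (lborel::'a::euclidean_space measure)
           (\<lambda>z. indicator {1<..} (norm z) * (norm z powr a * \<rho> (norm z)))"
proof -
  define g where "g r = indicator {1<..} r * (r powr a * \<rho> r)" for r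
  have c1: "continuous_on {1<..} (\<lambda>r. r powr a * \<rho> r)"
    by (intro continuous_intros continuous_on_subset[OF cont]) auto
  have gm[measurable]: "g \<in> borel_measurable borel"
    using borel_measurable_continuous_on_indicator[OF _ c1] unfolding g_def by simp
  have gnn: "g r \<ge> 0" for r
  proof (cases "r > 1")
    case True thus ?thesis using pos[rule_format, of r] by (auto simp: g_def)
  qed (auto simp: g_def)
  define d where "d = DIM('a)"
  define c where "c = real d * unit_ball_vol (real d)"
  have dpos: "d > 0" by (simp add: d_def)
  have cnn: "c \<ge> 0" by (simp add: c_def)
  define m where "m r = indicator {1..} r * (r powr (real d + a - 1) * \<rho> r)" for r
  have mint: "integrable lborel m"
    using mom unfolding set_integrable_def m_def d_def by simp
  have mfin: "(\<integral>\<^sup>+r. ennreal (m r) \<partial>lborel) < \<infinity>"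
  proof -
    have "(\<integral>\<^sup>+r. ennreal (m r) \<partial>lborel) \<le> (\<integral>\<^sup>+r. ennreal (norm (m r)) \<partial>lborel)"
      by (intro nn_integral_mono) (simp add: ennreal_leI)
    also have "\<dots> < \<infinity>" using mint by (simp add: integrable_iff_bounded)
    finally show ?thesis .
  qed
  have pw: "ennreal (radd d r) * ennreal (g r) \<le> ennreal c * ennreal (m r)" for r
  proof (cases "r > 1")
    case True
    have e: "real d + a - 1 = real (d - 1) + a" using dpos by (simp add: of_nat_diff)
    have "r ^ (d - 1) * r powr a = r powr (real d + a - 1)"
      unfolding e using True by (simp add: powr_realpow[symmetric] powr_add)
    then have "radd d r * g r = c * m r"
      using True by (simp add: radd_def g_def m_def c_def indicator_def algebra_simps)
    then have "ennreal (radd d r) * ennreal (g r) = ennreal c * ennreal (m r)"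
      using cnn by (metis ennreal_mult' radd_nonneg)
    thus ?thesis by simp
  next
    case False thus ?thesis by (simp add: g_def)
  qed
  have "(\<integral>\<^sup>+z. ennreal (g (norm z)) \<partial>(lborel::'a measure)) = (\<integral>\<^sup>+r. ennreal (radd d r) * ennreal (g r) \<partial>lborel)"
    unfolding d_def by (rule nn_integral_radial) simp
  also have "\<dots> \<le> (\<integral>\<^sup>+r. ennreal c * ennreal (m r) \<partial>lborel)"
    by (intro nn_integral_mono pw)
  also have "\<dots> = ennreal c * (\<integral>\<^sup>+r. ennreal (m r) \<partial>lborel)"
    using borel_measurable_integrable[OF mint] by (subst nn_integral_cmult) auto
  also have "\<dots> < \<infinity>" using mfin by (simp add: ennreal_mult_less_top)
  finally have fin: "(\<integral>\<^sup>+z. ennreal (g (norm z)) \<partial>(lborel::'a measure)) < \<infinity>" .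
  have "integrable (lborel::'a measure) (\<lambda>z. g (norm z))"
    by (rule integrableI_nonneg) (use fin gnn in auto)
  thus ?thesis unfolding g_def .
qed



theorem lemma4p3:
  fixes V :: "'a::euclidean_space \<Rightarrow> real" and \<rho> :: "real \<Rightarrow> real"
    and \<phi> :: "'a \<Rightarrow> real" and \<alpha>0 :: real
  assumes V_meas: "V \<in> borel_measurable lborel"
    and V_locbdd: "\<forall>x. \<exists>e>0. bounded (V ` ball x e)"
    and expV_bdd: "bounded (range (\<lambda>x. exp (- V x)))"
    and expV_int: "integrable lborel (\<lambda>x. exp (- V x))"
    and rho_cont: "continuous_on {0<..} \<rho>"
    and rho_pos: "\<forall>r>0. \<rho> r > 0"
    and rho_int: "set_integrable lborel {0<..}
                    (\<lambda>r. \<rho> r * min 1 (r\<^sup>2) * r ^ (DIM('a) - 1))"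
    and gam_pos: "\<forall>r>0. gam \<rho> r > 0"
    and alpha0: "0 < \<alpha>0" "\<alpha>0 < 1"
    and rho_mom: "set_integrable lborel {1..} (\<lambda>r. r powr (real DIM('a) + \<alpha>0 - 1) * \<rho> r)"
    and tail: "Limsup at_infinity
                 (\<lambda>x::'a. ereal ((SUP z\<in>{z. norm z \<ge> norm x}. exp (- V z))
                        / (gam \<rho> (norm x) * norm x powr \<alpha>0))) = 0"
    and phi_smooth: "smooth \<phi>"
    and phi_ge: "\<forall>x. \<phi> x \<ge> 1"
    and phi_eq: "\<forall>x. norm x > 1 \<longrightarrow> \<phi> x = 1 + norm x powr \<alpha>0"
  shows "(\<forall>x. set_integrable lborel {z. norm z > 1} (Lint \<rho> V \<phi> x))
       \<and> (\<forall>x. \<exists>e>0. bounded (hatL \<rho> V \<phi> ` ball x e))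
       \<and> (\<exists>r0 C1 C2. r0 > 0 \<and> C1 > 0 \<and> C2 > 0 \<and>
            (\<forall>x. hatL \<rho> V \<phi> x \<le> - C1 * exp (V x) * gam \<rho> (norm x) * \<phi> x
                                   + C2 * indicator (ball 0 r0) x))"
proof -
  define a where "a = \<alpha>0"
  have a: "0 < a" "a < 1" using alpha0 by (auto simp: a_def)
  have rpos: "\<rho> r > 0" if "r > 0" for r using rho_pos that by blast
  have phic: "continuous_on UNIV \<phi>"
    using phi_smooth unfolding smooth_def by (metis Ck.simps(1))
  have Vb[measurable]: "V \<in> borel_measurable borel" using V_meas by simp
  have phib[measurable]: "\<phi> \<in> borel_measurable borel"
    using phic by (rule borel_measurable_continuous_onI)
  obtain M0 where M0: "\<And>y. norm y \<le> 1 \<Longrightarrow> \<phi> y \<le> M0"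
  proof -
    have "compact (\<phi> ` cball 0 1)"
      by (intro compact_continuous_image continuous_on_subset[OF phic]) auto
    then obtain M where "\<forall>u\<in>\<phi> ` cball 0 1. norm u \<le> M"
      using compact_imp_bounded bounded_iff by metis
    thus ?thesis using that[of M] by force
  qed
  have M0ge: "M0 \<ge> 1" using M0[of 0] phi_ge[rule_format, of 0] by simp
  have phi_le: "\<phi> y \<le> M0 + norm y powr a" for y
  proof (cases "norm y > 1")
    case True thus ?thesis using phi_eq M0ge by (simp add: a_def)
  next
    case False
    then have "\<phi> y \<le> M0" using M0 by simp
    thus ?thesis using powr_ge_zero[of "norm y" a] by linarith
  qed
  define H where "H = M0 + 2"
  have H: "\<bar>\<phi> y - (1 + norm y powr a)\<bar> \<le> H" for y
  proof (cases "norm y > 1")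
    case True thus ?thesis using phi_eq M0ge by (simp add: a_def H_def)
  next
    case False
    have "norm y powr a \<le> 1" using False a powr_le_one_le[of "norm y" a]
      by (simp add: powr_le1)
    moreover have "\<phi> y \<le> M0" using M0 False by simp
    ultimately show ?thesis using phi_ge[rule_format, of y] powr_ge_zero[of "norm y" a] unfolding H_def by linarith
  qed
  define K where "K = 2 * H + 1"
  have Kpos: "K > 0" using M0ge by (simp add: K_def H_def)
  have Dphi: "\<bar>\<phi> (x + z) - \<phi> x\<bar> \<le> K * norm z powr a" if "norm z \<ge> 1" for x z
  proof -
    have n1: "norm z powr a \<ge> 1" using that a by (simp add: ge_one_powr_ge_zero)
    have "\<bar>\<phi> (x + z) - \<phi> x\<bar> \<le> 2 * H + \<bar>norm (x+z) powr a - norm x powr a\<bar>"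
      using H[of "x+z"] H[of x] by linarith
    also have "\<dots> \<le> 2 * H + norm z powr a" using powr_norm_diff[of a x z] a by simp
    also have "\<dots> \<le> K * norm z powr a"
    proof -
      have "2 * H * 1 \<le> 2 * H * norm z powr a" using n1 M0ge by (intro mult_left_mono) (auto simp: H_def)
      thus ?thesis by (simp add: K_def algebra_simps)
    qed
    finally show ?thesis .
  qed
  obtain E where E: "\<And>y. exp (- V y) \<le> E" and Epos: "E > 0"
  proof -
    obtain B where "\<forall>u\<in>range (\<lambda>x. exp (- V x)). norm u \<le> B" using expV_bdd bounded_iff by metis
    then have "\<And>y. exp (- V y) \<le> B" by force
    moreover have "B > 0" using \<open>\<And>y. exp (- V y) \<le> B\<close>[of 0] exp_gt_zero[of "- V 0"] by linarith
    ultimately show ?thesis using that by blast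
  qed
  define G where "G z = indicator {1<..} (norm z) * (norm z powr a * \<rho> (norm z))" for z :: 'a
  have Gint: "integrable lborel G"
    unfolding G_def a_def by (rule radial_int[OF rho_cont rho_pos _ rho_mom]) (use a in \<open>simp add: a_def\<close>)
  have Gnn: "G z \<ge> 0" for z
  proof (cases "1 < norm z")
    case True
    then have "\<rho> (norm z) > 0" by (intro rpos) linarith
    thus ?thesis using True by (auto simp: G_def intro!: mult_nonneg_nonneg)
  qed (simp add: G_def)
  define I where "I = integral\<^sup>L lborel G"

  have Inn: "I \<ge> 0" unfolding I_def using Gnn by (simp add: integral_nonneg)
  define F where "F x z = indicator {z. 1 < norm z} z * Lint \<rho> V \<phi> x z" for x z :: 'a
  define r1 where "r1 r = indicator {1<..} r * \<rho> r" for r :: real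
  have rho1[measurable]: "r1 \<in> borel_measurable borel"
    using borel_measurable_continuous_on_indicator[of "{1<..}" \<rho>]
      continuous_on_subset[OF rho_cont, of "{1<..}"] by (auto simp: r1_def[abs_def])
  have Feq: "F x = (\<lambda>z. (\<phi> (x + z) - \<phi> x) * r1 (norm z) *
                     (exp (V x - V (x + z)) + 1))" for x
    by (auto simp: F_def Lint_def indicator_def fun_eq_iff r1_def)
  have Fmeas: "F x \<in> borel_measurable lborel" for x
    unfolding Feq by measurable
  have Fbound: "\<bar>F x z\<bar> \<le> K * (exp (V x) * E + 1) * G z" for x z
  proof (cases "1 < norm z")
    case True
    have rp: "\<rho> (norm z) > 0" using True by (intro rpos) linarith
    have ed: "exp (V x - V (x+z)) = exp (V x) * exp (- V (x+z))" by (simp add: exp_add[symmetric])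
    have w1: "0 < exp (V x - V (x + z)) + 1" using exp_gt_zero[of "V x - V (x + z)"] by linarith
    have "exp (V x) * exp (- V (x+z)) \<le> exp (V x) * E" using E[of "x+z"] by (intro mult_left_mono) auto
    then have w: "0 < exp (V x - V (x + z)) + 1" "exp (V x - V (x + z)) + 1 \<le> exp (V x) * E + 1"
      using w1 ed by auto
    have "\<bar>F x z\<bar> = \<bar>\<phi> (x + z) - \<phi> x\<bar> * \<rho> (norm z) * (exp (V x - V (x + z)) + 1)"
      using True rp w by (simp add: F_def Lint_def abs_mult)
    also have "\<dots> \<le> (K * norm z powr a) * \<rho> (norm z) * (exp (V x) * E + 1)"
      using Dphi[of z x] True rp w
      by (intro mult_mono) auto
    also have "\<dots> = K * (exp (V x) * E + 1) * G z" using True by (simp add: G_def)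
    finally show ?thesis .
  next
    case False thus ?thesis by (simp add: F_def G_def)
  qed
  have Fint: "integrable lborel (F x)" for x
    by (rule Bochner_Integration.integrable_bound[OF integrable_mult_right[OF Gint, of "K * (exp (V x) * E + 1)"] Fmeas])
       (use Fbound Gnn Kpos Epos in \<open>auto simp: abs_mult\<close>)
  have hatL_eq: "hatL \<rho> V \<phi> x = 1/2 * integral\<^sup>L lborel (F x)" for x
    by (simp add: hatL_def set_lebesgue_integral_def F_def[abs_def])
  have hatL_abs: "\<bar>hatL \<rho> V \<phi> x\<bar> \<le> 1/2 * (K * (exp (V x) * E + 1) * I)" for x
  proof -
    have "\<bar>integral\<^sup>L lborel (F x)\<bar> \<le> integral\<^sup>L lborel (\<lambda>z. K * (exp (V x) * E + 1) * G z)"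
      by (rule integral_abs_bound_integral[OF Fint]) (use Gint Fbound in auto)
    also have "\<dots> = K * (exp (V x) * E + 1) * I" by (simp add: I_def)
    finally show ?thesis unfolding hatL_eq by simp
  qed
  have part1: "\<forall>x. set_integrable lborel {z. norm z > 1} (Lint \<rho> V \<phi> x)"
    using Fint by (simp add: set_integrable_def F_def[abs_def])
  have part2: "\<forall>x. \<exists>e>0. bounded (hatL \<rho> V \<phi> ` ball x e)"
  proof
    fix x
    obtain e where e: "e > 0" "bounded (V ` ball x e)" using V_locbdd by blast
    then obtain B where B0: "\<forall>u\<in>V ` ball x e. norm u \<le> B" unfolding bounded_iff by blast
    have B: "\<bar>V y\<bar> \<le> B" if "y \<in> ball x e" for y using B0 that by simp
    have "\<bar>hatL \<rho> V \<phi> y\<bar> \<le> 1/2 * (K * (exp B * E + 1) * I)" if "y \<in> ball x e" for y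
    proof -
      have "exp (V y) \<le> exp B" using B[OF that] by simp
      then have "K * (exp (V y) * E + 1) * I \<le> K * (exp B * E + 1) * I"
        using Kpos Epos Inn by (intro mult_right_mono mult_left_mono) auto
      thus ?thesis using hatL_abs[of y] by linarith
    qed
    then have "\<forall>u\<in>hatL \<rho> V \<phi> ` ball x e. norm u \<le> 1/2 * (K * (exp B * E + 1) * I)"
      by simp
    then have "bounded (hatL \<rho> V \<phi> ` ball x e)"
      unfolding bounded_iff by blast
    thus "\<exists>e>0. bounded (hatL \<rho> V \<phi> ` ball x e)" using e by blast
  qed
  obtain e B0 where eB0: "e > 0" "\<And>y. y \<in> ball 0 e \<Longrightarrow> \<bar>V y\<bar> \<le> B0"
  proof -
    obtain e where e: "e > 0" "bounded (V ` ball 0 e)" using V_locbdd by blast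
    then obtain B where B0: "\<forall>u\<in>V ` ball 0 e. norm u \<le> B" unfolding bounded_iff by blast
    show ?thesis by (rule that[OF e(1), of B]) (use B0 in simp)
  qed
  define e0 where "e0 = min e 1"
  have e0: "e0 > 0" "e0 \<le> 1" "e0 \<le> e" using eB0 by (auto simp: e0_def)
  define Ib where "Ib y = indicator (ball 0 e0) y * exp (- V y)" for y :: 'a
  have Ibm[measurable]: "Ib \<in> borel_measurable borel"
  proof -
    have [measurable]: "ball (0::'a) e0 \<in> sets borel" by simp
    show ?thesis unfolding Ib_def[abs_def] using Vb by measurable
  qed
  have Ibint: "integrable lborel Ib"
  proof -
    have "ball 0 e0 \<in> sets (lborel::'a measure)" by simp
    from integrable_mult_indicator[OF this expV_int] show ?thesis by (simp add: Ib_def[abs_def])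
  qed
  define m where "m = integral\<^sup>L lborel Ib"
  have mpos: "m > 0"
  proof -
    have lb: "exp (- B0) * indicator (ball (0::'a) e0) y \<le> Ib y" for y
    proof (cases "y \<in> ball 0 e0")
      case True
      then have "\<bar>V y\<bar> \<le> B0" using eB0(2) e0 by auto
      thus ?thesis using True by (simp add: Ib_def)
    qed (simp add: Ib_def)
    have "integral\<^sup>L lborel (\<lambda>y. exp (- B0) * indicator (ball (0::'a) e0) y) \<le> m"
      unfolding m_def by (rule integral_mono[OF _ Ibint lb]) (auto simp: emeasure_ball_0 intro!: integrable_mult_right)
    moreover have "integral\<^sup>L lborel (\<lambda>y. exp (- B0) * indicator (ball (0::'a) e0) y) = exp (- B0) * measure lborel (ball (0::'a) e0)"
      by simp
    moreover have "measure lborel (ball (0::'a) e0) > 0" using e0 by (intro content_ball_pos) auto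
    ultimately show ?thesis by (smt (verit) exp_gt_zero mult_pos_pos)
  qed
  have transl: "integrable lborel (\<lambda>z. Ib (x + z))" "integral\<^sup>L lborel (\<lambda>z. Ib (x + z)) = m" for x :: 'a
  proof -
    have D: "distr lborel borel ((+) x) = lborel" by (rule lborel_distr_plus)
    show "integrable lborel (\<lambda>z. Ib (x + z))"
      using integrable_distr_eq[of "(+) x" lborel borel Ib] Ibint by (simp add: D)
    show "integral\<^sup>L lborel (\<lambda>z. Ib (x + z)) = m"
      using integral_distr[of "(+) x" lborel borel Ib] by (simp add: D m_def)
  qed
  define S where "S x = (SUP z\<in>{z. norm z \<ge> norm x}. exp (- V z))" for x :: 'a
  have S_ge: "exp (- V y) \<le> S x" if "norm y \<ge> norm x" for x y
    unfolding S_def by (rule cSUP_upper) (use that E in \<open>auto intro!: bdd_aboveI2\<close>)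
  have gam_le: "gam \<rho> t \<le> \<rho> r" if "0 < r" "r \<le> t + 1" for t r
    unfolding gam_def by (rule cInf_lower) (use that rpos in \<open>auto intro!: bdd_belowI2[of _ 0] less_imp_le\<close>)
  have gam_nn: "gam \<rho> t \<ge> 0" if "t \<ge> 0" for t
    unfolding gam_def by (rule cInf_greatest) (use that rpos in \<open>auto intro: less_imp_le\<close>)
  define \<delta> where "\<delta> = m / (8 * (K * I + 1))"
  have KI: "K * I \<ge> 0" using Kpos Inn by simp
  have dpos: "\<delta> > 0" using mpos KI by (simp add: \<delta>_def)
  obtain b where b: "\<And>x. b \<le> norm x \<Longrightarrow> S x / (gam \<rho> (norm x) * norm x powr a) < \<delta>"
  proof -
    have "ereal \<delta> > Limsup at_infinity
                 (\<lambda>x::'a. ereal ((SUP z\<in>{z. norm z \<ge> norm x}. exp (- V z))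
                        / (gam \<rho> (norm x) * norm x powr \<alpha>0)))" using tail dpos by simp
    from Limsup_lessD[OF this] obtain b where
      "\<forall>x. b \<le> norm x \<longrightarrow> ereal (S x / (gam \<rho> (norm x) * norm x powr a)) < ereal \<delta>"
      unfolding eventually_at_infinity S_def a_def by blast
    thus ?thesis using that by auto
  qed
  define R0 where "R0 = max (max b 3) ((2 * M0) powr (1 / a))"
  have large: "hatL \<rho> V \<phi> x \<le> - (m/16) * exp (V x) * gam \<rho> (norm x) * \<phi> x" if nx: "norm x \<ge> R0" for x
  proof -
    have nx3: "norm x \<ge> 3" and nxb: "norm x \<ge> b" using nx by (auto simp: R0_def)
    define X where "X = norm x powr a"
    have X2: "X \<ge> 2 * M0"
    proof -
      have "((2 * M0) powr (1 / a)) powr a \<le> norm x powr a"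
        using nx a by (intro powr_mono2) (auto simp: R0_def)
      moreover have "((2 * M0) powr (1 / a)) powr a = 2 * M0" using a M0ge by (simp add: powr_powr)
      ultimately show ?thesis by (simp add: X_def)
    qed
    have X1: "X \<ge> 1" using X2 M0ge by simp
    define \<gamma> where "\<gamma> = gam \<rho> (norm x)"
    have "norm x > 0" using nx3 by linarith
    then have gpos: "\<gamma> > 0" using gam_pos unfolding \<gamma>_def by blast
    define ev where "ev = exp (V x)"
    have evpos: "ev > 0" by (simp add: ev_def)
    have phix: "\<phi> x = 1 + X" using phi_eq nx3 by (simp add: X_def a_def)
    have Spos: "S x > 0" using S_ge[of x x] exp_gt_zero[of "- V x"] by linarith
    define c1 where "c1 = K * (ev * S x + 1)"
    define c2 where "c2 = ev * (X / 2) * \<gamma>"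
    have pw: "F x z \<le> c1 * G z - c2 * Ib (x + z)" for z
    proof (cases "1 < norm z")
      case False
      have "norm x - norm z \<le> norm (x + z)" using norm_diff_ineq[of x z] by simp
      then have "x + z \<notin> ball 0 e0" using False nx3 e0 by auto
      thus ?thesis using False by (simp add: F_def G_def Ib_def)
    next
      case True
      have rz: "\<rho> (norm z) > 0" using True by (intro rpos) linarith
      define D where "D = \<phi> (x + z) - \<phi> x"
      define en where "en = exp (- V (x + z))"
      have enpos: "en > 0" by (simp add: en_def)
      have W: "exp (V x - V (x + z)) + 1 = ev * en + 1"
        by (simp add: ev_def en_def exp_add[symmetric])
      have Fz: "F x z = D * \<rho> (norm z) * (ev * en + 1)"
        using True by (simp add: F_def Lint_def D_def W)
      have Gz: "G z = norm z powr a * \<rho> (norm z)" using True by (simp add: G_def)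
      have c1G: "c1 * G z \<ge> 0" using Gnn[of z] Kpos evpos Spos
        by (auto simp: c1_def intro!: mult_nonneg_nonneg add_nonneg_nonneg less_imp_le)
      show ?thesis
      proof (cases "norm (x + z) \<ge> norm x")
        case ge: True
        have Ib0: "Ib (x + z) = 0" using ge nx3 e0 by (simp add: Ib_def)
        have enS: "en \<le> S x" using S_ge[OF ge] by (simp add: en_def)
        have DK: "D \<le> K * norm z powr a" using Dphi[of z x] True by (simp add: D_def)
        have Kn: "K * norm z powr a \<ge> 0" using Kpos by simp
        have w1: "ev * en + 1 \<le> ev * S x + 1" using enS evpos by simp
        have w0: "ev * en + 1 \<ge> 0" using evpos enpos by (simp add: less_imp_le)
        have "D * (ev * en + 1) \<le> K * norm z powr a * (ev * en + 1)"
          by (rule mult_right_mono[OF DK w0])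
        also have "\<dots> \<le> K * norm z powr a * (ev * S x + 1)"
          by (rule mult_left_mono[OF w1 Kn])
        finally have "D * (ev * en + 1) * \<rho> (norm z) \<le> K * norm z powr a * (ev * S x + 1) * \<rho> (norm z)"
          using rz by (intro mult_right_mono) auto
        thus ?thesis unfolding Fz Gz Ib0 c1_def by (simp add: algebra_simps)
      next
        case lt: False
        show ?thesis
        proof (cases "norm (x + z) < e0")
          case small: True
          have Ib1: "Ib (x + z) = en" using small by (simp add: Ib_def en_def)
          have "\<phi> (x + z) \<le> M0" using M0 small e0 by simp
          then have DX: "D \<le> - (X / 2)" using X2 phix by (simp add: D_def)
          have "norm z = norm ((x + z) - x)" by simp
          also have "\<dots> \<le> norm (x + z) + norm x" by (rule norm_triangle_ineq4)
          finally have "norm z \<le> norm x + 1" using small e0 by simp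
          then have rg: "\<gamma> \<le> \<rho> (norm z)" unfolding \<gamma>_def using True by (intro gam_le) auto
          have "D * \<rho> (norm z) \<le> - (X / 2) * \<rho> (norm z)" using DX rz by (intro mult_right_mono) auto
          also have "\<dots> \<le> - (X / 2) * \<gamma>" using rg X1 by (intro mult_left_mono_neg) auto
          finally have Dr: "D * \<rho> (norm z) \<le> - (X / 2) * \<gamma>" .
          have "0 \<le> (X / 2) * \<gamma>" using X1 gpos by simp
          then have Dr0: "D * \<rho> (norm z) \<le> 0" using Dr by linarith
          have "F x z = D * \<rho> (norm z) * (ev * en) + D * \<rho> (norm z)" by (simp add: Fz algebra_simps)
          also have "\<dots> \<le> D * \<rho> (norm z) * (ev * en)" using Dr0 by simp
          also have "\<dots> \<le> - (X / 2) * \<gamma> * (ev * en)"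
            using Dr evpos enpos by (intro mult_right_mono) auto
          also have "\<dots> = - c2 * Ib (x + z)" by (simp add: c2_def Ib1 algebra_simps)
          also have "\<dots> \<le> c1 * G z - c2 * Ib (x + z)" using c1G by simp
          finally show ?thesis .
        next
          case mid: False
          have Ib0: "Ib (x + z) = 0" using mid by (simp add: Ib_def)
          have "\<phi> (x + z) \<le> 1 + X"
          proof (cases "norm (x + z) > 1")
            case True
            then have "\<phi> (x + z) = 1 + norm (x + z) powr a" using phi_eq by (simp add: a_def)
            moreover have "norm (x + z) powr a \<le> X" using lt a unfolding X_def by (intro powr_mono2) auto
            ultimately show ?thesis by simp
          next
            case False
            then have "\<phi> (x + z) \<le> M0" using M0 by simp
            thus ?thesis using X2 M0ge by simp
          qed
          then have D0: "D \<le> 0" using phix by (simp add: D_def)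
          have w0: "ev * en + 1 \<ge> 0" using evpos enpos by (simp add: less_imp_le)
          have "F x z \<le> 0" unfolding Fz
            by (rule mult_nonpos_nonneg[OF mult_nonpos_nonneg[OF D0] w0]) (use rz in simp)
          thus ?thesis using c1G Ib0 by simp
        qed
      qed
    qed
    have intF: "integral\<^sup>L lborel (F x) \<le> c1 * I - c2 * m"
    proof -
      have "integral\<^sup>L lborel (F x) \<le> integral\<^sup>L lborel (\<lambda>z. c1 * G z - c2 * Ib (x + z))"
        by (rule integral_mono[OF Fint]) (use Gint transl pw in auto)
      also have "\<dots> = c1 * I - c2 * m"
        using Gint transl by (simp add: I_def)
      finally show ?thesis .
    qed
    define P where "P = ev * \<gamma> * X"
    have Ppos: "P > 0" using evpos gpos X1 by (simp add: P_def)
    define R where "R = S x / (\<gamma> * X)"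
    have Rd: "R < \<delta>" using b[OF nxb] by (simp add: R_def \<gamma>_def X_def)
    have SR: "ev * S x = P * R" using gpos X1 by (simp add: R_def P_def)
    have evS: "ev * S x \<ge> 1"
    proof -
      have "ev * exp (- V x) = 1" by (simp add: ev_def exp_minus)
      moreover have "ev * exp (- V x) \<le> ev * S x" using S_ge[of x x] evpos by simp
      ultimately show ?thesis by simp
    qed
    have PRd: "P * R \<le> P * \<delta>" using Rd Ppos by simp
    have Pd: "1 \<le> P * \<delta>" using evS SR PRd by simp
    have Pm: "8 * (K * I + 1) \<le> P * m"
      using Pd KI by (simp add: \<delta>_def le_divide_eq)
    have t1: "K * I * (ev * S x) \<le> K * I * (P * \<delta>)"
      using SR PRd KI by (simp add: mult_left_mono)
    have t2: "K * I * (P * \<delta>) \<le> P * m / 8"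
    proof -
      have "K * I * (P * \<delta>) = (P * m / 8) * (K * I / (K * I + 1))"
        using KI by (simp add: \<delta>_def field_simps)
      also have "\<dots> \<le> (P * m / 8) * 1"
        using KI Ppos mpos by (intro mult_left_mono) auto
      finally show ?thesis by simp
    qed
    have t3: "K * I \<le> P * m / 8" using Pm by simp
    have "integral\<^sup>L lborel (F x) \<le> K * I * (ev * S x) + K * I - P * m / 2"
      using intF by (simp add: c1_def c2_def P_def algebra_simps)
    also have "\<dots> \<le> - (P * m / 4)" using t1 t2 t3 by simp
    finally have J: "hatL \<rho> V \<phi> x \<le> - (P * m / 8)" unfolding hatL_eq by simp
    have "(m / 16) * (ev * \<gamma>) * (1 + X) \<le> (m / 16) * (ev * \<gamma>) * (2 * X)"
      using X1 mpos evpos gpos by (intro mult_left_mono) auto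
    then have K1: "- (P * m / 8) \<le> - (m/16) * ev * \<gamma> * (1 + X)" by (simp add: P_def algebra_simps)
    have K2: "- (m/16) * exp (V x) * gam \<rho> (norm x) * \<phi> x = - (m/16) * ev * \<gamma> * (1 + X)"
      by (simp add: phix ev_def \<gamma>_def)
    show ?thesis using J K1 K2 by linarith
  qed
  define r0 where "r0 = R0"
  have r0pos: "r0 > 0" by (simp add: r0_def R0_def)
  obtain BV where BV: "\<And>y. y \<in> cball 0 r0 \<Longrightarrow> \<bar>V y\<bar> \<le> BV"
  proof -
    have "bounded (V ` cball 0 r0)" by (rule locbdd_compact[OF V_locbdd compact_cball])
    then obtain B where B0: "\<forall>u\<in>V ` cball 0 r0. norm u \<le> B" unfolding bounded_iff by blast
    show ?thesis by (rule that[of B]) (use B0 in simp)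
  qed
  define C2 where "C2 = 1/2 * (K * (exp BV * E + 1) * I) + (m / 16) * (exp BV * \<rho> 1) * (M0 + r0 powr a) + 1"
  have near: "hatL \<rho> V \<phi> x \<le> - (m/16) * exp (V x) * gam \<rho> (norm x) * \<phi> x + C2" if "x \<in> ball 0 r0" for x
  proof -
    have xb: "norm x < r0" using that by simp
    have evb: "exp (V x) \<le> exp BV" using BV[of x] xb by simp
    have "hatL \<rho> V \<phi> x \<le> 1/2 * (K * (exp (V x) * E + 1) * I)" using hatL_abs[of x] by simp
    also have "\<dots> \<le> 1/2 * (K * (exp BV * E + 1) * I)"
      using evb Kpos Epos Inn by (intro mult_left_mono mult_right_mono) auto
    finally have h1: "hatL \<rho> V \<phi> x \<le> 1/2 * (K * (exp BV * E + 1) * I)" .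
    have gn: "gam \<rho> (norm x) \<ge> 0" by (rule gam_nn) simp
    have g1: "gam \<rho> (norm x) \<le> \<rho> 1" by (rule gam_le) auto
    have p1: "\<phi> x \<le> M0 + r0 powr a"
    proof -
      have "norm x powr a \<le> r0 powr a" using xb a by (intro powr_mono2) auto
      thus ?thesis using phi_le[of x] by simp
    qed
    have "exp (V x) * gam \<rho> (norm x) \<le> exp BV * \<rho> 1"
      using evb g1 gn by (intro mult_mono) auto
    then have "(exp (V x) * gam \<rho> (norm x)) * \<phi> x \<le> (exp BV * \<rho> 1) * (M0 + r0 powr a)"
      by (rule mult_mono) (use p1 phi_ge[rule_format, of x] rpos[of 1] \<open>exp (V x) * gam \<rho> (norm x) \<le> exp BV * \<rho> 1\<close> in auto)
    then have "(m/16) * ((exp (V x) * gam \<rho> (norm x)) * \<phi> x) \<le> (m/16) * ((exp BV * \<rho> 1) * (M0 + r0 powr a))"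
      using mpos by (intro mult_left_mono) auto
    moreover have "C2 = 1/2 * (K * (exp BV * E + 1) * I) + (m/16) * ((exp BV * \<rho> 1) * (M0 + r0 powr a)) + 1"
      by (simp add: C2_def)
    moreover have "- (m/16) * exp (V x) * gam \<rho> (norm x) * \<phi> x = - ((m/16) * ((exp (V x) * gam \<rho> (norm x)) * \<phi> x))"
      by simp
    ultimately show ?thesis using h1 by linarith
  qed
  have C2pos: "C2 > 0"
  proof -
    have "0 \<le> 1/2 * (K * (exp BV * E + 1) * I)" using Kpos Epos Inn by simp
    moreover have "0 \<le> (m / 16) * (exp BV * \<rho> 1) * (M0 + r0 powr a)"
      using mpos rpos[of 1] M0ge by simp
    ultimately show ?thesis by (simp add: C2_def)
  qed
  have part3: "\<exists>r0 C1 C2. r0 > 0 \<and> C1 > 0 \<and> C2 > 0 \<and>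
            (\<forall>x. hatL \<rho> V \<phi> x \<le> - C1 * exp (V x) * gam \<rho> (norm x) * \<phi> x
                                   + C2 * indicator (ball 0 r0) x)"
  proof (intro exI conjI allI)
    show "r0 > 0" "m / 16 > 0" "C2 > 0" using r0pos mpos C2pos by auto
    fix x :: 'a
    show "hatL \<rho> V \<phi> x \<le> - (m/16) * exp (V x) * gam \<rho> (norm x) * \<phi> x + C2 * indicator (ball 0 r0) x"
    proof (cases "x \<in> ball 0 r0")
      case True thus ?thesis using near[OF True] by simp
    next
      case False
      then have "norm x \<ge> R0" by (simp add: r0_def)
      thus ?thesis using large False by simp
    qed
  qed
  show ?thesis using part1 part2 part3 by blast
qed

end
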